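(* For any integers $i\ge1$ and $w\ge0$ and every $j\in\{0,\dots,w\}$, it holds that $\mathcal{P}_i[j]=\max_{a+b=j,\ a,b\ge0}\big(\mathcal{P}_{i-1}[a]+\mathcal{P}_{i-1}[b]\big)$; that is, $\mathcal{P}_i[0..w]$ coincides with the first $w+1$ entries of the $(\max,+)$-convolution of $\mathcal{P}_{i-1}[0..w]$ with itself.
   Context: Fix an \textsc{Unbounded Knapsack} instance: items $(p_1,w_1),\dots,(p_n,w_n)$ with $p_k,w_k\in\mathbb{N}$ and capacity $W$. For $x\in\mathbb{N}^n$: $p(x)=\sum_kp_kx_k$, $w(x)=\sum_kw_kx_k$, $\|x\|_1=\sum_kx_k$. For an integer $i\ge0$ and $j\ge0$, $\mathcal{P}_i[j]:=\max\{p(x): x\in\mathbb{N}^n,\ w(x)\le j,\ \|x\|_1\le2^i\}$. The $(\max,+)$-convolution of $A[0..n],B[0..n]$ is $C[k]=\max_{i+j=k}A[i]+B[j]$. *)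

theory Defs
  imports Main
begin

text \<open>An Unbounded Knapsack instance with n items is given by two lists ps, ws of
natural numbers of the same length n (profits p_k = ps!k and weights w_k = ws!k).\<close>

definition profit :: "nat list \<Rightarrow> nat list \<Rightarrow> nat" where
  "profit ps x = (\<Sum>k<length ps. ps ! k * x ! k)"

definition weight :: "nat list \<Rightarrow> nat list \<Rightarrow> nat" where
  "weight ws x = (\<Sum>k<length ws. ws ! k * x ! k)"

definition norm1 :: "nat list \<Rightarrow> nat" where
  "norm1 x = sum_list x"

definition Ptab :: "nat list \<Rightarrow> nat list \<Rightarrow> nat \<Rightarrow> nat \<Rightarrow> nat" where
  "Ptab ps ws i j = Max {profit ps x | x. length x = length ps \<and> weight ws x \<le> j \<and> norm1 x \<le> 2 ^ i}"

definition maxplus_conv :: "(nat \<Rightarrow> nat) \<Rightarrow> (nat \<Rightarrow> nat) \<Rightarrow> nat \<Rightarrow> nat" where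
  "maxplus_conv A B k = Max {A a + B b | a b. a + b = k}"

end

theory Submission
  imports Defs
begin

lemma split_vec:
  fixes x :: "nat list"
  shows "sum_list x \<le> m1 + m2 \<Longrightarrow> \<exists>y z. length y = length x \<and> length z = length x \<and>
     map2 (+) y z = x \<and> sum_list y \<le> m1 \<and> sum_list z \<le> m2"
proof (induction x arbitrary: m1 m2)
  case Nil
  then show ?case by auto
next
  case (Cons a xs)
  define y0 where "y0 = min a m1"
  define z0 where "z0 = a - y0"
  have "sum_list xs \<le> (m1 - y0) + (m2 - z0)" using Cons.prems unfolding y0_def z0_def by auto
  then obtain y z where h: "length y = length xs" "length z = length xs"
     "map2 (+) y z = xs" "sum_list y \<le> m1 - y0" "sum_list z \<le> m2 - z0"
    using Cons.IH[of "m1 - y0" "m2 - z0"] by blast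
  have z0m: "z0 \<le> m2" using Cons.prems unfolding y0_def z0_def by auto
  have y0m: "y0 \<le> m1" and yz0: "y0 + z0 = a" unfolding y0_def z0_def by auto
  have F: "length (y0 # y) = length (a # xs) \<and> length (z0 # z) = length (a # xs) \<and>
     map2 (+) (y0 # y) (z0 # z) = a # xs \<and> sum_list (y0 # y) \<le> m1 \<and> sum_list (z0 # z) \<le> m2"
  proof -
    have "y0 + sum_list y \<le> m1" using h(4) y0m by arith
    moreover have "z0 + sum_list z \<le> m2" using h(5) z0m by arith
    ultimately show ?thesis using h(1,2,3) yz0 by simp
  qed
  show ?case by (rule exI[of _ "y0 # y"], rule exI[of _ "z0 # z"], rule F)
qed

lemma dot_add:
  fixes ps y z :: "nat list"
  assumes "length y = length ps" "length z = length ps"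
  shows "(\<Sum>k<length ps. ps ! k * map2 (+) y z ! k) = (\<Sum>k<length ps. ps ! k * y ! k) + (\<Sum>k<length ps. ps ! k * z ! k)"
proof -
  have "(\<Sum>k<length ps. ps ! k * map2 (+) y z ! k) = (\<Sum>k<length ps. ps ! k * y ! k + ps ! k * z ! k)"
    by (rule sum.cong) (auto simp: assms algebra_simps)
  then show ?thesis by (simp add: sum.distrib)
qed

lemma sum_list_map2:
  fixes y z :: "nat list"
  shows "length y = length z \<Longrightarrow> sum_list (map2 (+) y z) = sum_list y + sum_list z"
  by (induction y z rule: list_induct2) auto

lemma fin_feas: "finite {x :: nat list. length x = n \<and> sum_list x \<le> B}"
proof -
  have "{x :: nat list. length x = n \<and> sum_list x \<le> B} \<subseteq> {x. set x \<subseteq> {0..B} \<and> length x = n}"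
    using member_le_sum_list by fastforce
  moreover have "finite {x. set x \<subseteq> {0..B::nat} \<and> length x = n}"
    by (rule finite_lists_length_eq) auto
  ultimately show ?thesis by (rule finite_subset)
qed

definition feas :: "nat list \<Rightarrow> nat list \<Rightarrow> nat \<Rightarrow> nat \<Rightarrow> nat list set" where "feas ps ws i j = {x. length x = length ps \<and> weight ws x \<le> j \<and> norm1 x \<le> 2 ^ i}"

lemma Ptab_alt: "Ptab ps ws i j = Max (profit ps ` feas ps ws i j)"
  unfolding Ptab_def feas_def by (rule arg_cong[where f=Max]) blast

lemma feas_fin: "finite (feas ps ws i j)"
  by (rule finite_subset[OF _ fin_feas[of "length ps" "2^i"]]) (auto simp: feas_def norm1_def)

lemma zero_feas: "length ps = length ws \<Longrightarrow> replicate (length ps) 0 \<in> feas ps ws i j"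
  by (auto simp: feas_def norm1_def weight_def sum_list_replicate)

lemma Ptab_ge: "x \<in> feas ps ws i j \<Longrightarrow> profit ps x \<le> Ptab ps ws i j"
  unfolding Ptab_alt using feas_fin[of ps ws i j] by auto

lemma Ptab_att: assumes "length ps = length ws" shows "\<exists>x \<in> feas ps ws i j. Ptab ps ws i j = profit ps x"
proof -
  have "Max (profit ps ` feas ps ws i j) \<in> profit ps ` feas ps ws i j"
    using feas_fin[of ps ws i j] zero_feas[OF assms, of i j] by (intro Max_in) auto
  then show ?thesis unfolding Ptab_alt by auto
qed

theorem lemma5p1:
  fixes ps ws :: "nat list" and i w j :: nat
  assumes "length ps = length ws"
    and "i \<ge> 1"
    and "j \<le> w"
  shows "Ptab ps ws i j = maxplus_conv (Ptab ps ws (i - 1)) (Ptab ps ws (i - 1)) j"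
proof -
  let ?P = "Ptab ps ws (i - 1)"
  have pw: "(2::nat) ^ i = 2 ^ (i - 1) + 2 ^ (i - 1)"
    using assms(2) by (cases i) auto
  have S: "{?P a + ?P b | a b. a + b = j} = (\<lambda>a. ?P a + ?P (j - a)) ` {..j}" (is "?L = ?R")
  proof
    show "?L \<subseteq> ?R"
    proof
      fix v assume "v \<in> ?L"
      then obtain a b where ab: "a + b = j" "v = ?P a + ?P b" by blast
      then have "b = j - a" "a \<in> {..j}" by auto
      then show "v \<in> ?R" using ab by blast
    qed
    show "?R \<subseteq> ?L"
    proof
      fix v assume "v \<in> ?R"
      then obtain a where "a \<le> j" "v = ?P a + ?P (j - a)" by auto
      then show "v \<in> ?L" by (intro CollectI exI[of _ a] exI[of _ "j - a"]) auto
    qed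
  qed
  have conv: "maxplus_conv ?P ?P j = Max ((\<lambda>a. ?P a + ?P (j - a)) ` {..j})"
    unfolding maxplus_conv_def S ..
  show ?thesis unfolding conv
  proof (rule antisym)
    obtain x where x: "x \<in> feas ps ws i j" "Ptab ps ws i j = profit ps x"
      using Ptab_att[OF assms(1)] by blast
    then have "sum_list x \<le> 2 ^ (i - 1) + 2 ^ (i - 1)" using pw by (auto simp: feas_def norm1_def)
    then obtain y z where yz: "length y = length x" "length z = length x"
      "map2 (+) y z = x" "sum_list y \<le> 2 ^ (i - 1)" "sum_list z \<le> 2 ^ (i - 1)"
      using split_vec by blast
    have lx: "length x = length ps" using x by (auto simp: feas_def)
    have pr: "profit ps x = profit ps y + profit ps z"
      using dot_add[of y ps z] yz(1,2,3) lx unfolding profit_def by simp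
    have wt: "weight ws x = weight ws y + weight ws z"
      using dot_add[of y ws z] yz(1,2,3) lx assms(1) unfolding weight_def by simp
    define a where "a = weight ws y"
    have wx: "weight ws x \<le> j" using x(1) by (simp add: feas_def)
    have aj: "a \<le> j" using wx wt unfolding a_def by linarith
    have "y \<in> feas ps ws (i - 1) a" using yz lx by (auto simp: feas_def a_def norm1_def)
    hence "profit ps y \<le> ?P a" by (rule Ptab_ge)
    moreover have "z \<in> feas ps ws (i - 1) (j - a)"
      unfolding feas_def norm1_def using yz(2,5) lx wx wt unfolding a_def by simp
    hence "profit ps z \<le> ?P (j - a)" by (rule Ptab_ge)
    ultimately have "Ptab ps ws i j \<le> ?P a + ?P (j - a)" using x pr by simp
    also have "\<dots> \<le> Max ((\<lambda>a. ?P a + ?P (j - a)) ` {..j})"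
      using aj by (intro Max_ge) auto
    finally show "Ptab ps ws i j \<le> Max ((\<lambda>a. ?P a + ?P (j - a)) ` {..j})" .
  next
    show "Max ((\<lambda>a. ?P a + ?P (j - a)) ` {..j}) \<le> Ptab ps ws i j"
    proof (rule Max.boundedI)
      fix v assume "v \<in> (\<lambda>a. ?P a + ?P (j - a)) ` {..j}"
      then obtain a where a: "a \<le> j" "v = ?P a + ?P (j - a)" by auto
      obtain y where y: "y \<in> feas ps ws (i - 1) a" "?P a = profit ps y" using Ptab_att[OF assms(1)] by blast
      obtain z where z: "z \<in> feas ps ws (i - 1) (j - a)" "?P (j - a) = profit ps z" using Ptab_att[OF assms(1)] by blast
      have ly: "length y = length ps" and lz: "length z = length ps"
        using y z by (auto simp: feas_def)
      have pr: "profit ps (map2 (+) y z) = profit ps y + profit ps z"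
        using dot_add[OF ly lz] unfolding profit_def by simp
      have wt: "weight ws (map2 (+) y z) = weight ws y + weight ws z"
        using dot_add[of y ws z] ly lz assms(1) unfolding weight_def by simp
      have "map2 (+) y z \<in> feas ps ws i j"
      proof -
        have "weight ws y \<le> a" "weight ws z \<le> j - a" "sum_list y \<le> 2^(i-1)" "sum_list z \<le> 2^(i-1)"
          using y(1) z(1) by (simp_all add: feas_def norm1_def)
        then show ?thesis unfolding feas_def norm1_def using ly lz wt pw sum_list_map2[of y z] a(1)
          by simp
      qed
      hence "profit ps (map2 (+) y z) \<le> Ptab ps ws i j" by (rule Ptab_ge)
      then show "v \<le> Ptab ps ws i j" using a y z pr by simp
    qed simp_all
  qed
qed

end
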